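(* Let $H$ be a finite group of odd order. Then \[ \mathsf{GEN}(H)=\begin{cases} *0, & \text{if } |H|=1,\\ *2, & \text{if } |H|>1 \text{ and } d(H)\in\{1,2\},\\ *1, & \text{otherwise.}\end{cases} \]
   Context: For a finite group $G$, $\mathsf{GEN}(G)$ is the following impartial two-player game. A position is a set of elements selected so far; the starting position is $\emptyset$. From a position $P$ with $\langle P\rangle\neq G$, the player to move selects some $g\in G\setminus P$, producing the position $P\cup\{g\}$ (these are the options of $P$); a position $P$ with $\langle P\rangle = G$ has no options. The nim-number of a position is defined recursively by $\operatorname{nim}(P)=\operatorname{mex}\{\operatorname{nim}(Q): Q \text{ an option of } P\}$, where $\operatorname{mex}(A)$ is the least nonnegative integer not in $A$. We write $\mathsf{GEN}(G)=*n$ if $\operatorname{nim}(\emptyset)=n$. $d(G)$ denotes the minimum size of a generating set of $G$. *)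

theory Defs
  imports "HOL-Algebra.Generated_Groups"
begin

definition mex :: "nat set \<Rightarrow> nat" where
  "mex A = (LEAST n. n \<notin> A)"

text \<open>A position P with generate G P = carrier G has no options; otherwise the options are
  insert g P for g in carrier G - P.  Each move decreases card (carrier G - P) by one,
  so for finite G the fuel card (carrier G - P) suffices.\<close>
fun gen_nim_aux :: "('a, 'b) monoid_scheme \<Rightarrow> nat \<Rightarrow> 'a set \<Rightarrow> nat" where
  "gen_nim_aux G 0 P = 0"
| "gen_nim_aux G (Suc k) P =
     mex {gen_nim_aux G k (insert g P) | g. g \<in> carrier G - P \<and> generate G P \<noteq> carrier G}"

definition gen_nim :: "('a, 'b) monoid_scheme \<Rightarrow> 'a set \<Rightarrow> nat" where
  "gen_nim G P = gen_nim_aux G (card (carrier G - P)) P"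

definition GEN :: "('a, 'b) monoid_scheme \<Rightarrow> nat" where
  "GEN G = gen_nim G {}"

definition min_gen :: "('a, 'b) monoid_scheme \<Rightarrow> nat" where
  "min_gen G = (LEAST n. \<exists>S. S \<subseteq> carrier G \<and> finite S \<and> card S = n \<and> generate G S = carrier G)"

end

theory Submission
  imports Defs
begin

lemma mex_eqI:
  assumes "n \<notin> A" "\<And>m. m < n \<Longrightarrow> m \<in> A"
  shows "mex A = n"
  unfolding mex_def
  by (rule Least_equality) (use assms in \<open>auto intro: leI\<close>)

locale oddgrp = group G for G (structure) +
  assumes fin: "finite (carrier G)" and odd: "odd (order G)"
begin

abbreviation T where "T X \<equiv> generate G X = carrier G"

lemma gen_sub: "X \<subseteq> carrier G \<Longrightarrow> X \<subseteq> generate G X"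
  by (auto intro: generate.incl)

lemma gen_carrier: "X \<subseteq> carrier G \<Longrightarrow> generate G X \<subseteq> carrier G"
  by (rule generate_incl)

lemma T_mono: "T A \<Longrightarrow> A \<subseteq> B \<Longrightarrow> B \<subseteq> carrier G \<Longrightarrow> T B"
  using mono_generate[of A B] gen_carrier[of B] by blast

lemma gen_insert_in:
  assumes "P \<subseteq> carrier G" "g \<in> generate G P"
  shows "generate G (insert g P) = generate G P"
proof
  show "generate G (insert g P) \<subseteq> generate G P"
    using generate_subgroup_incl[OF _ generate_is_subgroup[OF assms(1)], of "insert g P"]
      assms gen_sub[OF assms(1)] by blast
  show "generate G P \<subseteq> generate G (insert g P)" by (rule mono_generate) blast
qed

lemma even_extra:
  assumes "P \<subseteq> carrier G" "even (card P)"
  shows "\<exists>g. g \<in> generate G P - P"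
proof (rule ccontr)
  assume "\<not> ?thesis"
  then have eq: "generate G P = P" using gen_sub[OF assms(1)] by blast
  have "card (rcosets (generate G P)) * card (generate G P) = order G"
    by (rule lagrange[OF generate_is_subgroup[OF assms(1)]])
  then have "card (generate G P) dvd order G" by (metis dvd_triv_right)
  then show False using odd assms(2) eq by (metis dvd_trans)
qed

lemma gen_nim_rec:
  assumes "P \<subseteq> carrier G"
  shows "gen_nim G P = mex {gen_nim G (insert g P) | g. g \<in> carrier G - P \<and> generate G P \<noteq> carrier G}"
proof (cases "card (carrier G - P)")
  case 0
  then have "carrier G - P = {}" using fin by simp
  then have PC: "P = carrier G" using assms by blast
  have "generate G P \<subseteq> carrier G" using gen_carrier[OF assms] .
  moreover have "P \<subseteq> generate G P" using gen_sub[OF assms] .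
  ultimately have "generate G P = carrier G" using PC by blast
  then show ?thesis using 0 unfolding gen_nim_def by (simp add: mex_def)
next
  case (Suc k)
  have cardk: "\<And>g. g \<in> carrier G - P \<Longrightarrow> card (carrier G - insert g P) = k"
  proof -
    fix g assume g: "g \<in> carrier G - P"
    have "carrier G - insert g P = (carrier G - P) - {g}" by blast
    then show "card (carrier G - insert g P) = k" using g Suc fin by simp
  qed
  have eqg: "\<And>g. g \<in> carrier G - P \<Longrightarrow> gen_nim_aux G k (insert g P) = gen_nim G (insert g P)"
    unfolding gen_nim_def using cardk by simp
  have "{gen_nim_aux G k (insert g P) | g. g \<in> carrier G - P \<and> generate G P \<noteq> carrier G}
     = {gen_nim G (insert g P) | g. g \<in> carrier G - P \<and> generate G P \<noteq> carrier G}"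
  proof (rule Collect_cong)
    fix x
    show "(\<exists>g. x = gen_nim_aux G k (insert g P) \<and> g \<in> carrier G - P \<and> generate G P \<noteq> carrier G) =
          (\<exists>g. x = gen_nim G (insert g P) \<and> g \<in> carrier G - P \<and> generate G P \<noteq> carrier G)"
      using eqg by metis
  qed
  then show ?thesis using Suc unfolding gen_nim_def by simp
qed

lemma key:
  assumes "P \<subseteq> carrier G"
  shows "gen_nim G P = (if T P then 0 else if odd (card P) then
     (if \<exists>h\<in>carrier G. T (insert h P) then 1 else 0)
     else (if \<exists>g\<in>carrier G. \<exists>h\<in>carrier G. T (insert g (insert h P)) then 2 else 1))"
  using assms
proof (induction "card (carrier G - P)" arbitrary: P rule: less_induct)
  case less
  note P = less.prems
  have finP: "finite P" using P fin finite_subset by blast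
  define S where "S = {gen_nim G (insert g P) | g. g \<in> carrier G - P}"
  have IH: "\<And>g. g \<in> carrier G - P \<Longrightarrow> gen_nim G (insert g P) =
     (if T (insert g P) then 0 else if odd (card (insert g P)) then
     (if \<exists>h\<in>carrier G. T (insert h (insert g P)) then 1 else 0)
     else (if \<exists>a\<in>carrier G. \<exists>h\<in>carrier G. T (insert a (insert h (insert g P))) then 2 else 1))"
  proof -
    fix g assume g: "g \<in> carrier G - P"
    have "card (carrier G - insert g P) < card (carrier G - P)"
      using g fin by (intro psubset_card_mono) auto
    moreover have "insert g P \<subseteq> carrier G" using g P by blast
    ultimately show "?thesis g" using less.hyps[of "insert g P"] by blast
  qed
  have cardins: "\<And>g. g \<in> carrier G - P \<Longrightarrow> card (insert g P) = Suc (card P)"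
    using finP by simp
  have IHe: "\<And>g. g \<in> carrier G - P \<Longrightarrow> odd (card P) \<Longrightarrow> gen_nim G (insert g P) =
     (if T (insert g P) then 0
     else (if \<exists>a\<in>carrier G. \<exists>h\<in>carrier G. T (insert a (insert h (insert g P))) then 2 else 1))"
  proof -
    fix g assume g: "g \<in> carrier G - P" and o: "odd (card P)"
    have "even (card (insert g P))" using cardins[OF g] o by simp
    then show "?thesis g" using IH[OF g] by presburger
  qed
  have IHo: "\<And>g. g \<in> carrier G - P \<Longrightarrow> even (card P) \<Longrightarrow> gen_nim G (insert g P) =
     (if T (insert g P) then 0 else
     (if \<exists>h\<in>carrier G. T (insert h (insert g P)) then 1 else 0))"
  proof -
    fix g assume g: "g \<in> carrier G - P" and o: "even (card P)"
    have "odd (card (insert g P))" using cardins[OF g] o by simp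
    then show "?thesis g" using IH[OF g] by presburger
  qed
  have Smem: "\<And>v. v \<in> S \<Longrightarrow> \<exists>g. g \<in> carrier G - P \<and> gen_nim G (insert g P) = v"
    unfolding S_def by blast
  have Sin: "\<And>g. g \<in> carrier G - P \<Longrightarrow> gen_nim G (insert g P) \<in> S"
    unfolding S_def by blast
  show ?case
  proof (cases "T P")
    case True
    then show ?thesis using gen_nim_rec[OF P] by (simp add: mex_def)
  next
    case NT: False
    have rec: "gen_nim G P = mex S" using gen_nim_rec[OF P] NT unfolding S_def by simp
    show ?thesis
    proof (cases "odd (card P)")
      case oddP: True
      show ?thesis
      proof (cases "\<exists>h\<in>carrier G. T (insert h P)")
        case True
        then obtain h where h: "h \<in> carrier G" "T (insert h P)" by blast
        have hP: "h \<notin> P" using h NT by (metis insert_absorb)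
        have "gen_nim G (insert h P) = 0" using IHe[of h] h hP oddP by simp
        then have "0 \<in> S" using Sin[of h] h hP by simp
        moreover have "1 \<notin> S"
        proof
          assume "1 \<in> S"
          then obtain g where g: "g \<in> carrier G - P" "gen_nim G (insert g P) = 1"
            using Smem by blast
          have "T (insert h (insert h (insert g P)))"
            using T_mono[OF h(2)] h g P by auto
          then have "\<exists>a\<in>carrier G. \<exists>b\<in>carrier G. T (insert a (insert b (insert g P)))"
            using h by blast
          then have "gen_nim G (insert g P) \<noteq> 1" using IHe[OF g(1) oddP] by simp
          then show False using g by simp
        qed
        ultimately have "mex S = 1" by (intro mex_eqI) auto
        then show ?thesis using rec NT oddP True by simp
      next
        case False
        have "0 \<notin> S"
        proof
          assume "0 \<in> S"
          then obtain g where g: "g \<in> carrier G - P" "gen_nim G (insert g P) = 0"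
            using Smem by blast
          have "\<not> T (insert g P)" using False g by blast
          then have "gen_nim G (insert g P) \<noteq> 0" using IHe[OF g(1) oddP] by simp
          then show False using g by simp
        qed
        then have "mex S = 0" by (intro mex_eqI) auto
        then show ?thesis using rec NT oddP False by simp
      qed
    next
      case evenP: False
      then have evenP': "even (card P)" by simp
      obtain g0 where g0: "g0 \<in> generate G P - P" using even_extra P evenP' by blast
      have g0c: "g0 \<in> carrier G" using g0 gen_carrier[OF P] by blast
      have g0gen: "generate G (insert g0 P) = generate G P" using gen_insert_in P g0 by blast
      have g0CP: "g0 \<in> carrier G - P" using g0 g0c by blast
      have S0: "0 \<in> S"
      proof (cases "\<exists>h\<in>carrier G. T (insert h P)")
        case True
        then obtain h where h: "h \<in> carrier G" "T (insert h P)" by blast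
        have hP: "h \<in> carrier G - P" using h NT by (metis insert_absorb Diff_iff)
        have "gen_nim G (insert h P) = 0" using IHo[OF hP evenP'] h by simp
        then show ?thesis using Sin[OF hP] by simp
      next
        case False
        have nt: "\<not> T (insert h (insert g0 P))" if h: "h \<in> carrier G" for h
        proof -
          have "g0 \<in> generate G (insert h P)"
            using g0 mono_generate[of P "insert h P"] by blast
          then have "generate G (insert g0 (insert h P)) = generate G (insert h P)"
            using gen_insert_in[of "insert h P" g0] h P by blast
          then show ?thesis using False h by (simp add: insert_commute)
        qed
        have "\<not> T (insert g0 P)" using g0gen NT by simp
        moreover have "\<not> (\<exists>h\<in>carrier G. T (insert h (insert g0 P)))" using nt by blast
        ultimately have "gen_nim G (insert g0 P) = 0" using IHo[OF g0CP evenP'] by simp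
        then show ?thesis using Sin[OF g0CP] by simp
      qed
      show ?thesis
      proof (cases "\<exists>g\<in>carrier G. \<exists>h\<in>carrier G. T (insert g (insert h P))")
        case True
        have "\<exists>k \<in> carrier G - P. \<not> T (insert k P) \<and> (\<exists>h\<in>carrier G. T (insert h (insert k P)))"
        proof (cases "\<exists>k\<in>carrier G. T (insert k P)")
          case True
          then obtain k where k: "k \<in> carrier G" "T (insert k P)" by blast
          have "T (insert k (insert g0 P))" using T_mono[OF k(2)] k g0c P by auto
          moreover have "\<not> T (insert g0 P)" using g0gen NT by simp
          ultimately show ?thesis using g0CP k by blast
        next
          case False
          obtain g h where gh: "g \<in> carrier G" "h \<in> carrier G" "T (insert g (insert h P))"
            using True by blast
          have "h \<notin> P" using gh False by (metis insert_absorb)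
          then show ?thesis using gh False by blast
        qed
        then obtain k h where k: "k \<in> carrier G - P" "\<not> T (insert k P)" "h \<in> carrier G"
            "T (insert h (insert k P))" by blast
        have "\<exists>h\<in>carrier G. T (insert h (insert k P))" using k by blast
        then have "gen_nim G (insert k P) = 1" using IHo[OF k(1) evenP'] k(2) by simp
        then have S1: "1 \<in> S" using Sin[OF k(1)] by simp
        have "2 \<notin> S"
        proof
          assume "2 \<in> S"
          then obtain g where g: "g \<in> carrier G - P" "gen_nim G (insert g P) = 2"
            using Smem by blast
          have "gen_nim G (insert g P) \<le> 1" using IHo[OF g(1) evenP'] by simp
          then show False using g by simp
        qed
        moreover have "\<And>m. m < 2 \<Longrightarrow> m \<in> S" using S0 S1 by (auto simp: less_2_cases_iff)
        ultimately have "mex S = 2" by (intro mex_eqI)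
        then show ?thesis using rec NT evenP True by simp
      next
        case False
        have "1 \<notin> S"
        proof
          assume "1 \<in> S"
          then obtain g where g: "g \<in> carrier G - P" "gen_nim G (insert g P) = 1"
            using Smem by blast
          have "\<not> (\<exists>h\<in>carrier G. T (insert h (insert g P)))"
          proof
            assume "\<exists>h\<in>carrier G. T (insert h (insert g P))"
            then obtain h where "h \<in> carrier G" "T (insert h (insert g P))" by blast
            then show False using False g by blast
          qed
          then have "gen_nim G (insert g P) = 0" using IHo[OF g(1) evenP'] by simp
          then show False using g by simp
        qed
        then have "mex S = 1" using S0 by (intro mex_eqI) auto
        then show ?thesis using rec NT evenP False by simp
      qed
    qed
  qed
qed

end

theorem proposition4p1:
  fixes H :: "('a, 'b) monoid_scheme"
  assumes "group H" and "finite (carrier H)" and "odd (order H)"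
  shows "GEN H = (if order H = 1 then 0
                  else if min_gen H \<in> {1, 2} then 2
                  else 1)"
proof -
  interpret oddgrp H using assms by (simp add: oddgrp_def oddgrp_axioms_def)
  have k: "GEN H = (if generate H {} = carrier H then 0 else
     (if \<exists>g\<in>carrier H. \<exists>h\<in>carrier H. generate H {g, h} = carrier H then 2 else 1))"
    unfolding GEN_def using key[of "{}"] by simp
  have one: "\<one>\<^bsub>H\<^esub> \<in> carrier H" by simp
  have T0: "generate H {} = carrier H \<longleftrightarrow> order H = 1"
  proof
    assume "generate H {} = carrier H"
    then have "carrier H = {\<one>\<^bsub>H\<^esub>}" using generate_empty by simp
    then show "order H = 1" unfolding order_def by simp
  next
    assume "order H = 1"
    then have "carrier H = {\<one>\<^bsub>H\<^esub>}" using one unfolding order_def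
      by (metis card_1_singletonE singletonD)
    then show "generate H {} = carrier H" using generate_empty by simp
  qed
  have ex: "\<exists>S. S \<subseteq> carrier H \<and> finite S \<and> card S = card (carrier H) \<and> generate H S = carrier H"
    using assms(2) gen_sub gen_carrier by blast
  have ming: "\<exists>S. S \<subseteq> carrier H \<and> finite S \<and> card S = min_gen H \<and> generate H S = carrier H"
    unfolding min_gen_def by (rule LeastI_ex) (use ex in blast)
  have minle: "\<And>S. S \<subseteq> carrier H \<Longrightarrow> finite S \<Longrightarrow> generate H S = carrier H \<Longrightarrow> min_gen H \<le> card S"
    unfolding min_gen_def by (rule Least_le) blast
  have M: "order H \<noteq> 1 \<Longrightarrow>
    (\<exists>g\<in>carrier H. \<exists>h\<in>carrier H. generate H {g, h} = carrier H) \<longleftrightarrow> min_gen H \<in> {1, 2}"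
  proof
    assume o: "order H \<noteq> 1"
    assume "\<exists>g\<in>carrier H. \<exists>h\<in>carrier H. generate H {g, h} = carrier H"
    then obtain g h where gh: "g \<in> carrier H" "h \<in> carrier H" "generate H {g, h} = carrier H" by blast
    have "min_gen H \<le> card {g, h}" using minle[of "{g,h}"] gh by auto
    also have "\<dots> \<le> 2" by (simp add: card_insert_le_m1)
    finally have le: "min_gen H \<le> 2" .
    have "min_gen H \<noteq> 0"
    proof
      assume "min_gen H = 0"
      then obtain S where "S \<subseteq> carrier H" "finite S" "card S = 0" "generate H S = carrier H"
        using ming by metis
      then show False using T0 o by simp
    qed
    then show "min_gen H \<in> {1, 2}" using le by auto
  next
    assume "min_gen H \<in> {1, 2}"
    then obtain S where S: "S \<subseteq> carrier H" "finite S" "generate H S = carrier H"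
      "card S = 1 \<or> card S = 2"
      using ming by auto
    show "\<exists>g\<in>carrier H. \<exists>h\<in>carrier H. generate H {g, h} = carrier H"
      using S(4)
    proof
      assume "card S = 1"
      then obtain a where "S = {a}" by (metis card_1_singletonE)
      then show ?thesis using S by (intro bexI[of _ a]) auto
    next
      assume "card S = 2"
      then obtain a b where "S = {a, b}" by (metis card_2_iff)
      then show ?thesis using S by auto
    qed
  qed
  show ?thesis using k T0 M by auto
qed

end
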